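(* For a subsystem code with logical subsystem $\mathcal{H}_L$ of dimension at least $2$, the code price is at least the code distance: $p\ge d$.
   Context: Subsystem code: encoding isometry $V:\mathcal{H}_L\otimes\mathcal{H}_J\to\mathcal{H}_p$ onto a physical system of finitely many qudits; $\Pi=VV^\dagger$. $A$ is CSP if $[A,\Pi]=0$; bare-CSP if moreover $V^\dagger AV=A_L\otimes\mathrm{Id}_J$ (it implements $A_L\otimes\mathrm{Id}_J$). A region $R$ is a set of physical qudits; supported on $R$ means of the form $A_R\otimes\mathrm{Id}_{R^c}$. $R$ is correctable if for every $A_L\in\mathcal{B}(\mathcal{H}_L)$ there is a bare-CSP operator supported on $R^c$ implementing $A_L\otimes\mathrm{Id}_J$. Code distance $d=\min\{|R|: R\text{ not correctable}\}$; code price $p=\min\{|R|: R^c\text{ correctable}\}$, with $|R|$ the number of qudits. *)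

theory Defs
  imports Complex_Main
begin

text \<open>Physical system: n qudits, qudit i has local dimension dims i.
  Computational basis of H_p = configurations x with x i < dims i for i < n
  (and x i = 0 for i >= n). Operators on H_p are given by their matrix entries
  indexed by pairs of configurations. H_L (x) H_J has basis (l,j) with l < dL, j < dJ.
  The encoding isometry V is given by its entries V x (l,j).\<close>

definition cfgs :: "nat \<Rightarrow> (nat \<Rightarrow> nat) \<Rightarrow> (nat \<Rightarrow> nat) set" where
  "cfgs n dims = {x. \<forall>i. (i < n \<longrightarrow> x i < dims i) \<and> (n \<le> i \<longrightarrow> x i = 0)}"

definition lidx :: "nat \<Rightarrow> nat \<Rightarrow> (nat \<times> nat) set" where
  "lidx dL dJ = {..<dL} \<times> {..<dJ}"

type_synonym pop = "(nat \<Rightarrow> nat) \<Rightarrow> (nat \<Rightarrow> nat) \<Rightarrow> complex"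
type_synonym enc = "(nat \<Rightarrow> nat) \<Rightarrow> (nat \<times> nat) \<Rightarrow> complex"

definition pmult :: "nat \<Rightarrow> (nat \<Rightarrow> nat) \<Rightarrow> pop \<Rightarrow> pop \<Rightarrow> pop" where
  "pmult n dims A B = (\<lambda>x y. \<Sum>z\<in>cfgs n dims. A x z * B z y)"

definition is_isometry :: "nat \<Rightarrow> (nat \<Rightarrow> nat) \<Rightarrow> nat \<Rightarrow> nat \<Rightarrow> enc \<Rightarrow> bool" where
  "is_isometry n dims dL dJ V \<longleftrightarrow>
     (\<forall>k\<in>lidx dL dJ. \<forall>k'\<in>lidx dL dJ.
        (\<Sum>x\<in>cfgs n dims. cnj (V x k) * V x k') = (if k = k' then 1 else 0))"

definition code_proj :: "nat \<Rightarrow> nat \<Rightarrow> enc \<Rightarrow> pop" where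
  "code_proj dL dJ V = (\<lambda>x y. \<Sum>k\<in>lidx dL dJ. V x k * cnj (V y k))"

definition CSP :: "nat \<Rightarrow> (nat \<Rightarrow> nat) \<Rightarrow> nat \<Rightarrow> nat \<Rightarrow> enc \<Rightarrow> pop \<Rightarrow> bool" where
  "CSP n dims dL dJ V A \<longleftrightarrow>
     (\<forall>x\<in>cfgs n dims. \<forall>y\<in>cfgs n dims.
        pmult n dims A (code_proj dL dJ V) x y = pmult n dims (code_proj dL dJ V) A x y)"

text \<open>Entries of V^dagger A V.\<close>
definition pullback :: "nat \<Rightarrow> (nat \<Rightarrow> nat) \<Rightarrow> enc \<Rightarrow> pop \<Rightarrow> (nat \<times> nat) \<Rightarrow> (nat \<times> nat) \<Rightarrow> complex" where
  "pullback n dims V A k k' = (\<Sum>x\<in>cfgs n dims. \<Sum>y\<in>cfgs n dims. cnj (V x k) * A x y * V y k')"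

text \<open>A is bare-CSP and implements A_L (x) Id_J (A_L an operator on H_L, entries l,l' < dL).\<close>
definition bare_CSP_impl :: "nat \<Rightarrow> (nat \<Rightarrow> nat) \<Rightarrow> nat \<Rightarrow> nat \<Rightarrow> enc \<Rightarrow> pop \<Rightarrow> (nat \<Rightarrow> nat \<Rightarrow> complex) \<Rightarrow> bool" where
  "bare_CSP_impl n dims dL dJ V A AL \<longleftrightarrow>
     CSP n dims dL dJ V A \<and>
     (\<forall>k\<in>lidx dL dJ. \<forall>k'\<in>lidx dL dJ.
        pullback n dims V A k k' = AL (fst k) (fst k') * (if snd k = snd k' then 1 else 0))"

text \<open>A is supported on region R, i.e. A = A_R (x) Id_{R^c}: written out in the
  computational basis, A x y vanishes unless x and y agree outside R, and otherwise
  depends only on the restrictions of x and y to R.\<close>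
definition supported_on :: "nat \<Rightarrow> (nat \<Rightarrow> nat) \<Rightarrow> nat set \<Rightarrow> pop \<Rightarrow> bool" where
  "supported_on n dims R A \<longleftrightarrow>
     (\<exists>AR :: pop. \<forall>x\<in>cfgs n dims. \<forall>y\<in>cfgs n dims.
        A x y = (if (\<forall>i\<in>{..<n} - R. x i = y i)
                 then AR (\<lambda>i. if i \<in> R then x i else 0) (\<lambda>i. if i \<in> R then y i else 0)
                 else 0))"

definition correctable :: "nat \<Rightarrow> (nat \<Rightarrow> nat) \<Rightarrow> nat \<Rightarrow> nat \<Rightarrow> enc \<Rightarrow> nat set \<Rightarrow> bool" where
  "correctable n dims dL dJ V R \<longleftrightarrow>
     (\<forall>AL :: nat \<Rightarrow> nat \<Rightarrow> complex. \<exists>A :: pop.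
        supported_on n dims ({..<n} - R) A \<and> bare_CSP_impl n dims dL dJ V A AL)"

definition code_distance :: "nat \<Rightarrow> (nat \<Rightarrow> nat) \<Rightarrow> nat \<Rightarrow> nat \<Rightarrow> enc \<Rightarrow> nat" where
  "code_distance n dims dL dJ V =
     Min {card R | R. R \<subseteq> {..<n} \<and> \<not> correctable n dims dL dJ V R}"

definition code_price :: "nat \<Rightarrow> (nat \<Rightarrow> nat) \<Rightarrow> nat \<Rightarrow> nat \<Rightarrow> enc \<Rightarrow> nat" where
  "code_price n dims dL dJ V =
     Min {card R | R. R \<subseteq> {..<n} \<and> correctable n dims dL dJ V ({..<n} - R)}"

end

theory Submission
  imports Defs
begin

lemma finite_cfgs: "finite (cfgs n dims)"
proof -
  let ?M = "Max (dims ` {..<n})"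
  have "inj_on (\<lambda>x. map x [0..<n]) (cfgs n dims)"
  proof (rule inj_onI)
    fix x y assume x: "x \<in> cfgs n dims" and y: "y \<in> cfgs n dims" and e: "map x [0..<n] = map y [0..<n]"
    show "x = y"
    proof
      fix i show "x i = y i"
      proof (cases "i < n")
        case True then show ?thesis using e by (metis map_eq_conv atLeastLessThan_iff set_upt zero_le)
      next
        case False then show ?thesis using x y by (simp add: cfgs_def)
      qed
    qed
  qed
  moreover have "(\<lambda>x. map x [0..<n]) ` cfgs n dims \<subseteq> {xs. set xs \<subseteq> {..?M} \<and> length xs = n}"
  proof clarsimp
    fix x i assume x: "x \<in> cfgs n dims" and i: "i < n"
    have "x i < dims i" using x i by (simp add: cfgs_def)
    moreover have "dims i \<le> ?M" using i by (intro Max_ge) auto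
    ultimately show "x i \<le> ?M" by simp
  qed
  moreover have "finite {xs. set xs \<subseteq> {..?M} \<and> length xs = n}"
    by (rule finite_lists_length_eq) simp
  ultimately show ?thesis by (rule inj_on_finite)
qed

lemma finite_lidx: "finite (lidx dL dJ)"
  by (simp add: lidx_def)

lemma sum_single:
  assumes "finite S" "w \<in> S" "\<And>z. z \<in> S \<Longrightarrow> z \<noteq> w \<Longrightarrow> f z = 0"
  shows "sum f S = f w"
proof -
  have "sum f S = f w + sum f (S - {w})" using assms by (simp add: sum.remove)
  also have "sum f (S - {w}) = 0" using assms by (intro sum.neutral) auto
  finally show ?thesis by simp
qed

lemma supp_commute:
  assumes R: "R \<subseteq> {..<n}"
    and A: "supported_on n dims R A" and B: "supported_on n dims ({..<n} - R) B"
    and x: "x \<in> cfgs n dims" and y: "y \<in> cfgs n dims"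
  shows "pmult n dims A B x y = pmult n dims B A x y"
proof -
  obtain AR where AR: "\<And>x y. x\<in>cfgs n dims \<Longrightarrow> y\<in>cfgs n dims \<Longrightarrow>
        A x y = (if (\<forall>i\<in>{..<n} - R. x i = y i)
                 then AR (\<lambda>i. if i \<in> R then x i else 0) (\<lambda>i. if i \<in> R then y i else 0)
                 else 0)" using A unfolding supported_on_def by blast
  have RR: "{..<n} - ({..<n} - R) = R" using R by auto
  obtain BR where BR: "\<And>x y. x\<in>cfgs n dims \<Longrightarrow> y\<in>cfgs n dims \<Longrightarrow>
        B x y = (if (\<forall>i\<in>R. x i = y i)
                 then BR (\<lambda>i. if i \<in> {..<n} - R then x i else 0) (\<lambda>i. if i \<in> {..<n} - R then y i else 0)
                 else 0)" using B unfolding supported_on_def RR by blast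
  define w where "w = (\<lambda>i. if i \<in> R then y i else x i)"
  define w' where "w' = (\<lambda>i. if i \<in> R then x i else y i)"
  have w: "w \<in> cfgs n dims" using x y R unfolding w_def cfgs_def by auto
  have w': "w' \<in> cfgs n dims" using x y R unfolding w'_def cfgs_def by auto
  have "pmult n dims A B x y = A x w * B w y"
    unfolding pmult_def
  proof (rule sum_single[OF finite_cfgs w])
    fix z assume z: "z \<in> cfgs n dims" "z \<noteq> w"
    show "A x z * B z y = 0"
    proof (cases "(\<forall>i\<in>{..<n} - R. x i = z i) \<and> (\<forall>i\<in>R. z i = y i)")
      case True
      have "z = w"
      proof
        fix i show "z i = w i"
          using True z(1) x R unfolding w_def cfgs_def by (cases "i < n") auto
      qed
      then show ?thesis using z by simp
    next
      case False then show ?thesis using AR[OF x z(1)] BR[OF z(1) y] by auto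
    qed
  qed
  also have "\<dots> = AR (\<lambda>i. if i \<in> R then x i else 0) (\<lambda>i. if i \<in> R then y i else 0) *
      BR (\<lambda>i. if i \<in> {..<n} - R then x i else 0) (\<lambda>i. if i \<in> {..<n} - R then y i else 0)"
  proof -
    have 1: "(\<lambda>i. if i \<in> R then w i else 0) = (\<lambda>i. if i \<in> R then y i else 0)"
      unfolding w_def by auto
    have 2: "(\<lambda>i. if i \<in> {..<n} - R then w i else 0) = (\<lambda>i. if i \<in> {..<n} - R then x i else 0)"
      unfolding w_def by auto
    show ?thesis using AR[OF x w] BR[OF w y] 1 2 by (simp add: w_def)
  qed
  also have "\<dots> = B x w' * A w' y"
  proof -
    have 1: "(\<lambda>i. if i \<in> R then w' i else 0) = (\<lambda>i. if i \<in> R then x i else 0)"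
      unfolding w'_def by auto
    have 2: "(\<lambda>i. if i \<in> {..<n} - R then w' i else 0) = (\<lambda>i. if i \<in> {..<n} - R then y i else 0)"
      unfolding w'_def by auto
    show ?thesis using AR[OF w' y] BR[OF x w'] 1 2 by (simp add: w'_def)
  qed
  also have "\<dots> = pmult n dims B A x y"
    unfolding pmult_def
  proof (rule sum_single[OF finite_cfgs w', symmetric])
    fix z assume z: "z \<in> cfgs n dims" "z \<noteq> w'"
    show "B x z * A z y = 0"
    proof (cases "(\<forall>i\<in>R. x i = z i) \<and> (\<forall>i\<in>{..<n} - R. z i = y i)")
      case True
      have "z = w'"
      proof
        fix i show "z i = w' i"
          using True z(1) y R unfolding w'_def cfgs_def by (cases "i < n") auto
      qed
      then show ?thesis using z by simp
    next
      case False then show ?thesis using AR[OF z(1) y] BR[OF x z(1)] by auto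
    qed
  qed
  finally show ?thesis .
qed


lemma tri_sum:
  fixes a b :: "'c \<Rightarrow> complex"
  assumes "finite C" "finite L"
  shows "(\<Sum>m\<in>L. (\<Sum>y\<in>C. a y * f y m) * (\<Sum>u\<in>C. g m u * b u))
       = (\<Sum>y\<in>C. a y * (\<Sum>u\<in>C. (\<Sum>m\<in>L. f y m * g m u) * b u))"
proof -
  have "(\<Sum>m\<in>L. (\<Sum>y\<in>C. a y * f y m) * (\<Sum>u\<in>C. g m u * b u))
      = (\<Sum>m\<in>L. \<Sum>y\<in>C. \<Sum>u\<in>C. a y * f y m * g m u * b u)"
    by (simp add: sum_product mult.assoc)
  also have "\<dots> = (\<Sum>y\<in>C. \<Sum>m\<in>L. \<Sum>u\<in>C. a y * f y m * g m u * b u)"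
    by (rule sum.swap)
  also have "\<dots> = (\<Sum>y\<in>C. \<Sum>u\<in>C. \<Sum>m\<in>L. a y * f y m * g m u * b u)"
    by (intro sum.cong refl sum.swap)
  also have "\<dots> = (\<Sum>y\<in>C. a y * (\<Sum>u\<in>C. (\<Sum>m\<in>L. f y m * g m u) * b u))"
    by (simp add: sum_distrib_left sum_distrib_right mult.assoc)
  finally show ?thesis .
qed

lemma mv:
  fixes p :: "'a \<Rightarrow> complex"
  shows "(\<Sum>u\<in>S. p u * (\<Sum>v\<in>T. q u v * g v)) = (\<Sum>v\<in>T. (\<Sum>u\<in>S. p u * q u v) * g v)"
proof -
  have "(\<Sum>u\<in>S. p u * (\<Sum>v\<in>T. q u v * g v)) = (\<Sum>u\<in>S. \<Sum>v\<in>T. p u * q u v * g v)"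
    by (simp add: sum_distrib_left mult.assoc)
  also have "\<dots> = (\<Sum>v\<in>T. \<Sum>u\<in>S. p u * q u v * g v)" by (rule sum.swap)
  also have "\<dots> = (\<Sum>v\<in>T. (\<Sum>u\<in>S. p u * q u v) * g v)"
    by (simp add: sum_distrib_right)
  finally show ?thesis .
qed

lemma PiV:
  assumes iso: "is_isometry n dims dL dJ V" and k: "k \<in> lidx dL dJ"
  shows "(\<Sum>v\<in>cfgs n dims. code_proj dL dJ V u v * V v k) = V u k"
proof -
  have "(\<Sum>v\<in>cfgs n dims. code_proj dL dJ V u v * V v k)
      = (\<Sum>v\<in>cfgs n dims. \<Sum>m\<in>lidx dL dJ. V u m * (cnj (V v m) * V v k))"
    unfolding code_proj_def by (simp add: sum_distrib_right mult.assoc)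
  also have "\<dots> = (\<Sum>m\<in>lidx dL dJ. \<Sum>v\<in>cfgs n dims. V u m * (cnj (V v m) * V v k))"
    by (rule sum.swap)
  also have "\<dots> = (\<Sum>m\<in>lidx dL dJ. V u m * (\<Sum>v\<in>cfgs n dims. cnj (V v m) * V v k))"
    by (simp add: sum_distrib_left)
  also have "\<dots> = (\<Sum>m\<in>lidx dL dJ. if m = k then V u m else 0)"
    using iso k unfolding is_isometry_def by (intro sum.cong) auto
  also have "\<dots> = V u k" using k by (simp add: finite_lidx)
  finally show ?thesis .
qed

lemma pullback_mult:
  assumes iso: "is_isometry n dims dL dJ V" and B: "CSP n dims dL dJ V B"
    and k: "k \<in> lidx dL dJ" and k': "k' \<in> lidx dL dJ"
  shows "pullback n dims V (pmult n dims A B) k k'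
       = (\<Sum>m\<in>lidx dL dJ. pullback n dims V A k m * pullback n dims V B m k')"
proof -
  let ?C = "cfgs n dims" and ?L = "lidx dL dJ" and ?P = "code_proj dL dJ V"
  define W where "W y = (\<Sum>x\<in>?C. cnj (V x k) * A x y)" for y
  define G where "G u = (\<Sum>v\<in>?C. B u v * V v k')" for u
  have pb1: "pullback n dims V A k m = (\<Sum>y\<in>?C. W y * V y m)" for m
  proof -
    have "pullback n dims V A k m = (\<Sum>x\<in>?C. cnj (V x k) * (\<Sum>y\<in>?C. A x y * V y m))"
      unfolding pullback_def by (simp add: sum_distrib_left mult.assoc)
    also have "\<dots> = (\<Sum>y\<in>?C. W y * V y m)" unfolding W_def by (rule mv)
    finally show ?thesis .
  qed
  have pb2: "pullback n dims V B m k' = (\<Sum>u\<in>?C. cnj (V u m) * G u)" for m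
    unfolding pullback_def G_def by (simp add: sum_distrib_left mult.assoc)
  have "(\<Sum>m\<in>?L. pullback n dims V A k m * pullback n dims V B m k')
     = (\<Sum>m\<in>?L. (\<Sum>y\<in>?C. W y * V y m) * (\<Sum>u\<in>?C. cnj (V u m) * G u))"
    using pb1 pb2 by simp
  also have "\<dots> = (\<Sum>y\<in>?C. W y * (\<Sum>u\<in>?C. (\<Sum>m\<in>?L. V y m * cnj (V u m)) * G u))"
    by (rule tri_sum[OF finite_cfgs finite_lidx])
  also have "\<dots> = (\<Sum>y\<in>?C. W y * (\<Sum>u\<in>?C. ?P y u * G u))"
    unfolding code_proj_def by simp
  also have "\<dots> = (\<Sum>y\<in>?C. W y * (\<Sum>v\<in>?C. pmult n dims ?P B y v * V v k'))"
    unfolding G_def pmult_def by (simp only: mv)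
  also have "\<dots> = (\<Sum>y\<in>?C. W y * (\<Sum>v\<in>?C. pmult n dims B ?P y v * V v k'))"
    using B unfolding CSP_def by (intro sum.cong refl arg_cong2[where f="(*)"]) auto
  also have "\<dots> = (\<Sum>y\<in>?C. W y * (\<Sum>u\<in>?C. B y u * (\<Sum>v\<in>?C. ?P u v * V v k')))"
    unfolding pmult_def by (simp only: mv)
  also have "\<dots> = (\<Sum>y\<in>?C. W y * (\<Sum>u\<in>?C. B y u * V u k'))"
    using PiV[OF iso k'] by simp
  also have "\<dots> = (\<Sum>x\<in>?C. cnj (V x k) * (\<Sum>y\<in>?C. A x y * (\<Sum>u\<in>?C. B y u * V u k')))"
    unfolding W_def by (rule mv[symmetric])
  also have "\<dots> = (\<Sum>x\<in>?C. cnj (V x k) * (\<Sum>u\<in>?C. pmult n dims A B x u * V u k'))"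
    unfolding pmult_def by (simp only: mv)
  also have "\<dots> = pullback n dims V (pmult n dims A B) k k'"
    unfolding pullback_def by (simp add: sum_distrib_left mult.assoc)
  finally show ?thesis by simp
qed

definition opm :: "nat \<Rightarrow> nat \<Rightarrow> enc \<Rightarrow> ((nat \<times> nat) \<Rightarrow> (nat \<times> nat) \<Rightarrow> complex) \<Rightarrow> pop" where
  "opm dL dJ V M = (\<lambda>x y. \<Sum>a\<in>lidx dL dJ. V x a * (\<Sum>b\<in>lidx dL dJ. M a b * cnj (V y b)))"

lemma RV:
  assumes iso: "is_isometry n dims dL dJ V" and c: "c \<in> lidx dL dJ"
  shows "(\<Sum>z\<in>cfgs n dims. (\<Sum>b\<in>lidx dL dJ. M a b * cnj (V z b)) * V z c) = M a c"
proof -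
  have "(\<Sum>z\<in>cfgs n dims. (\<Sum>b\<in>lidx dL dJ. M a b * cnj (V z b)) * V z c)
      = (\<Sum>b\<in>lidx dL dJ. M a b * (\<Sum>z\<in>cfgs n dims. cnj (V z b) * V z c))"
    by (rule mv[symmetric])
  also have "\<dots> = (\<Sum>b\<in>lidx dL dJ. if b = c then M a b else 0)"
    using iso c unfolding is_isometry_def by (intro sum.cong) auto
  also have "\<dots> = M a c" using c by (simp add: finite_lidx)
  finally show ?thesis .
qed

lemma op_mult:
  assumes iso: "is_isometry n dims dL dJ V"
  shows "pmult n dims (opm dL dJ V M) (opm dL dJ V N) x y
       = opm dL dJ V (\<lambda>a d. \<Sum>c\<in>lidx dL dJ. M a c * N c d) x y"
proof -
  let ?C = "cfgs n dims" and ?L = "lidx dL dJ"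
  have "pmult n dims (opm dL dJ V M) (opm dL dJ V N) x y
     = (\<Sum>z\<in>?C. (\<Sum>a\<in>?L. V x a * (\<Sum>b\<in>?L. M a b * cnj (V z b))) *
                 (\<Sum>c\<in>?L. V z c * (\<Sum>d\<in>?L. N c d * cnj (V y d))))"
    unfolding pmult_def opm_def by simp
  also have "\<dots> = (\<Sum>a\<in>?L. V x a * (\<Sum>c\<in>?L. (\<Sum>z\<in>?C. (\<Sum>b\<in>?L. M a b * cnj (V z b)) * V z c)
                   * (\<Sum>d\<in>?L. N c d * cnj (V y d))))"
    by (rule tri_sum[OF finite_lidx finite_cfgs])
  also have "\<dots> = (\<Sum>a\<in>?L. V x a * (\<Sum>c\<in>?L. M a c * (\<Sum>d\<in>?L. N c d * cnj (V y d))))"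
    using RV[OF iso, where M=M] by simp
  also have "\<dots> = (\<Sum>a\<in>?L. V x a * (\<Sum>d\<in>?L. (\<Sum>c\<in>?L. M a c * N c d) * cnj (V y d)))"
    by (simp only: mv)
  finally show ?thesis unfolding opm_def by simp
qed

lemma pullback_op:
  assumes iso: "is_isometry n dims dL dJ V" and k: "k \<in> lidx dL dJ" and k': "k' \<in> lidx dL dJ"
  shows "pullback n dims V (opm dL dJ V M) k k' = M k k'"
proof -
  let ?C = "cfgs n dims" and ?L = "lidx dL dJ"
  have inner: "(\<Sum>y\<in>?C. opm dL dJ V M x y * V y k') = (\<Sum>a\<in>?L. V x a * M a k')" for x
  proof -
    have "(\<Sum>y\<in>?C. opm dL dJ V M x y * V y k') = (\<Sum>a\<in>?L. V x a *
                     (\<Sum>y\<in>?C. (\<Sum>b\<in>?L. M a b * cnj (V y b)) * V y k'))"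
      unfolding opm_def by (rule mv[symmetric])
    then show ?thesis using RV[OF iso k', where M=M] by simp
  qed
  have "pullback n dims V (opm dL dJ V M) k k'
      = (\<Sum>x\<in>?C. cnj (V x k) * (\<Sum>y\<in>?C. opm dL dJ V M x y * V y k'))"
    unfolding pullback_def by (simp add: sum_distrib_left mult.assoc)
  also have "\<dots> = (\<Sum>x\<in>?C. cnj (V x k) * (\<Sum>a\<in>?L. V x a * M a k'))"
    using inner by simp
  also have "\<dots> = (\<Sum>a\<in>?L. (\<Sum>x\<in>?C. cnj (V x k) * V x a) * M a k')"
    by (rule mv)
  also have "\<dots> = (\<Sum>a\<in>?L. if a = k then M a k' else 0)"
    using iso k unfolding is_isometry_def by (intro sum.cong) auto
  also have "\<dots> = M k k'" using k by (simp add: finite_lidx)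
  finally show ?thesis .
qed

lemma if01: "(if P then 1 else 0) * (z::complex) = (if P then z else 0)"
  "z * (if P then 1 else 0) = (if P then z else 0)" by simp_all

lemma proj_op: "code_proj dL dJ V = opm dL dJ V (\<lambda>a b. if a = b then 1 else 0)"
  unfolding code_proj_def opm_def by (simp add: finite_lidx if01)

lemma opm_cong:
  assumes "\<And>a b. a \<in> lidx dL dJ \<Longrightarrow> b \<in> lidx dL dJ \<Longrightarrow> M a b = M' a b"
  shows "opm dL dJ V M = opm dL dJ V M'"
  unfolding opm_def using assms by (intro ext sum.cong refl arg_cong2[where f="(*)"]) auto

lemma correctable_empty:
  assumes iso: "is_isometry n dims dL dJ V"
  shows "correctable n dims dL dJ V {}"
  unfolding correctable_def
proof
  fix AL :: "nat \<Rightarrow> nat \<Rightarrow> complex"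
  define M where "M k k' = AL (fst k) (fst k') * (if snd k = snd k' then 1 else 0)" for k k' :: "nat \<times> nat"
  let ?A = "opm dL dJ V M"
  let ?D = "\<lambda>a b :: nat \<times> nat. if a = b then (1::complex) else 0"
  have supp: "supported_on n dims ({..<n} - {}) ?A"
    unfolding supported_on_def
  proof (intro exI ballI)
    fix x y assume x: "x \<in> cfgs n dims" and y: "y \<in> cfgs n dims"
    have "(\<lambda>i. if i \<in> {..<n} - {} then x i else 0) = x" "(\<lambda>i. if i \<in> {..<n} - {} then y i else 0) = y"
      using x y by (auto simp: cfgs_def)
    then show "?A x y = (if \<forall>i\<in>{..<n} - ({..<n} - {}). x i = y i
        then ?A (\<lambda>i. if i \<in> {..<n} - {} then x i else 0) (\<lambda>i. if i \<in> {..<n} - {} then y i else 0) else 0)"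
      by simp
  qed
  have e1: "opm dL dJ V (\<lambda>a d. \<Sum>c\<in>lidx dL dJ. M a c * ?D c d) = ?A"
    by (rule opm_cong) (simp add: finite_lidx if01)
  have e2: "opm dL dJ V (\<lambda>a d. \<Sum>c\<in>lidx dL dJ. ?D a c * M c d) = ?A"
    by (rule opm_cong) (simp add: finite_lidx if01)
  have csp: "CSP n dims dL dJ V ?A"
    unfolding CSP_def proj_op using op_mult[OF iso] e1 e2 by simp
  have "bare_CSP_impl n dims dL dJ V ?A AL"
    unfolding bare_CSP_impl_def using csp pullback_op[OF iso] by (simp add: M_def)
  then show "\<exists>A. supported_on n dims ({..<n} - {}) A \<and> bare_CSP_impl n dims dL dJ V A AL"
    using supp by blast
qed

lemma pullback_cong:
  assumes "\<And>x y. x \<in> cfgs n dims \<Longrightarrow> y \<in> cfgs n dims \<Longrightarrow> A x y = B x y"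
  shows "pullback n dims V A k k' = pullback n dims V B k k'"
  unfolding pullback_def using assms by (intro sum.cong refl) auto

lemma not_both:
  assumes iso: "is_isometry n dims dL dJ V" and dJ: "1 \<le> dJ" and dL: "2 \<le> dL"
    and R: "R \<subseteq> {..<n}"
    and c1: "correctable n dims dL dJ V ({..<n} - R)"
  shows "\<not> correctable n dims dL dJ V R"
proof
  assume c2: "correctable n dims dL dJ V R"
  define AL :: "nat \<Rightarrow> nat \<Rightarrow> complex" where "AL l l' = (if l = 0 \<and> l' = 1 then 1 else 0)" for l l'
  define BL :: "nat \<Rightarrow> nat \<Rightarrow> complex" where "BL l l' = (if l = 1 \<and> l' = 0 then 1 else 0)" for l l'
  have RR: "{..<n} - ({..<n} - R) = R" using R by auto
  obtain A where A: "supported_on n dims R A" "bare_CSP_impl n dims dL dJ V A AL"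
    using c1 unfolding correctable_def RR by blast
  obtain B where B: "supported_on n dims ({..<n} - R) B" "bare_CSP_impl n dims dL dJ V B BL"
    using c2 unfolding correctable_def by blast
  let ?L = "lidx dL dJ"
  have z: "(0::nat, 0::nat) \<in> ?L" and o: "(1::nat, 0::nat) \<in> ?L" using dJ dL by (auto simp: lidx_def)
  have pA: "pullback n dims V A k k' = AL (fst k) (fst k') * (if snd k = snd k' then 1 else 0)"
    if "k \<in> ?L" "k' \<in> ?L" for k k' using A(2) that unfolding bare_CSP_impl_def by blast
  have pB: "pullback n dims V B k k' = BL (fst k) (fst k') * (if snd k = snd k' then 1 else 0)"
    if "k \<in> ?L" "k' \<in> ?L" for k k' using B(2) that unfolding bare_CSP_impl_def by blast
  have "pullback n dims V (pmult n dims A B) (0,0) (0,0) = pullback n dims V (pmult n dims B A) (0,0) (0,0)"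
    by (rule pullback_cong) (rule supp_commute[OF R A(1) B(1)])
  moreover have "pullback n dims V (pmult n dims A B) (0,0) (0,0) = 1"
  proof -
    have "pullback n dims V (pmult n dims A B) (0,0) (0,0)
        = (\<Sum>m\<in>?L. pullback n dims V A (0,0) m * pullback n dims V B m (0,0))"
      using B(2) unfolding bare_CSP_impl_def by (intro pullback_mult[OF iso _ z z]) blast
    also have "\<dots> = (\<Sum>m\<in>?L. if m = (1,0) then 1 else 0)"
      using z by (intro sum.cong refl) (auto simp: pA pB AL_def BL_def)
    also have "\<dots> = 1" using o by (simp add: finite_lidx)
    finally show ?thesis .
  qed
  moreover have "pullback n dims V (pmult n dims B A) (0,0) (0,0) = 0"
  proof -
    have "pullback n dims V (pmult n dims B A) (0,0) (0,0)
        = (\<Sum>m\<in>?L. pullback n dims V B (0,0) m * pullback n dims V A m (0,0))"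
      using A(2) unfolding bare_CSP_impl_def by (intro pullback_mult[OF iso _ z z]) blast
    also have "\<dots> = 0"
      using z by (intro sum.neutral ballI) (auto simp: pB BL_def)
    finally show ?thesis .
  qed
  ultimately show False by simp
qed

theorem lemma3:
  fixes n :: nat and dims :: "nat \<Rightarrow> nat" and dL dJ :: nat and V :: enc
  assumes "\<forall>i<n. 2 \<le> dims i"
    and "1 \<le> dJ"
    and "2 \<le> dL"
    and "is_isometry n dims dL dJ V"
  shows "code_distance n dims dL dJ V \<le> code_price n dims dL dJ V"
proof -
  let ?P = "{card R | R. R \<subseteq> {..<n} \<and> correctable n dims dL dJ V ({..<n} - R)}"
  let ?D = "{card R | R. R \<subseteq> {..<n} \<and> \<not> correctable n dims dL dJ V R}"
  have finP: "finite ?P"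
    by (rule finite_subset[of _ "{..n}"]) (auto dest: card_mono[rotated, OF _ finite_lessThan])
  have finD: "finite ?D"
    by (rule finite_subset[of _ "{..n}"]) (auto dest: card_mono[rotated, OF _ finite_lessThan])
  have "card {..<n} \<in> ?P"
  proof -
    have "{..<n} - {..<n} = ({}::nat set)" by simp
    then have "correctable n dims dL dJ V ({..<n} - {..<n})" using correctable_empty[OF assms(4)] by simp
    then show ?thesis by blast
  qed
  then have "?P \<noteq> {}" by blast
  then have "Min ?P \<in> ?P" using finP by (rule Min_in[rotated])
  then obtain R where R: "R \<subseteq> {..<n}" "correctable n dims dL dJ V ({..<n} - R)"
    and cR: "card R = Min ?P" by auto
  have "\<not> correctable n dims dL dJ V R"
    by (rule not_both[OF assms(4) assms(2) assms(3) R])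
  then have "card R \<in> ?D" using R by auto
  then have "Min ?D \<le> card R" using finD by simp
  then show ?thesis unfolding code_distance_def code_price_def using cR by simp
qed

end
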